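(* Let $\mathbb{M}=(a,b,[a],[b],[b^{-1}])$ be a Markov system of multiplicity $k$, and let $I_1,I_1',\dots,I_k,I_k'$, $b_1,\dots,b_k$ and $f_1=a\circ b_k\circ a\circ b_{k-1}\circ\cdots\circ a\circ b_1$ be as in the context. Then the stabilizer $\{g\in\mathbb{G}(\mathbb{M})\mid g(I_1)=I_1\}$ is infinite cyclic, generated by $f_1$.
   Context: A Markov system is a tuple $(a,b,[a],[b],[b^{-1}])$ with $a$ an orientation-preserving involution of $S^1$, $b$ an orientation-preserving homeomorphism of $S^1$ of period three, and $[a],[b],[b^{-1}]\subset S^1$ such that: (A) they are pairwise disjoint, each a union of $k$ disjoint closed intervals ($k\in\mathbb{N}$, the multiplicity); components are $a$-, $b$-, $b^{-1}$-intervals; $X=[a]\cup[b]\cup[b^{-1}]$; (B) no two $a$-intervals are consecutive among the components of $X$ in circular order; likewise for $b$- and for $b^{-1}$-intervals; with principal gaps (gaps of $X$ between an $a$-interval and a $b^{\pm1}$-interval), complementary gaps (between a $b$- and a $b^{-1}$-interval), $b$-blocks (maximal intervals made of $b^{\pm1}$-intervals and complementary gaps) and $[[b]]$ the union of $b$-blocks: (C) $a([a])=[[b]]$; (D) $b([a])=[b]$, $b([b])=[b^{-1}]$; (E) $a$ maps principal gaps to principal gaps and exactly one of $b^{\pm1}$ maps a given principal gap to a principal gap; the graph on principal gaps joining $J$ to $a(J)$ and to that image is connected. By (E) the principal gaps can be enumerated $I_1,I_1',I_2,I_2',\dots,I_k,I_k'$ so that for each $i$ there is $b_i\in\{b,b^{-1}\}$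 with $b_i(I_i)=I_i'$ and $a(I_i')=I_{i+1}$ (indices mod $k$). $\mathbb{G}(\mathbb{M})$ is the subgroup of $\mathrm{Homeo}_+(S^1)$ generated by $a$ and $b$. *)

theory Defs
  imports "HOL-Analysis.Analysis"
begin

definition circle :: "complex set" where
  "circle = {z. cmod z = 1}"

definition cover :: "real \<Rightarrow> complex" where
  "cover x = cis (2 * pi * x)"

definition homeo_plus :: "(complex \<Rightarrow> complex) \<Rightarrow> bool" where
  "homeo_plus f \<longleftrightarrow> (\<exists>F::real \<Rightarrow> real. continuous_on UNIV F \<and> strict_mono F \<and>
      (\<forall>x. F (x + 1) = F x + 1) \<and> (\<forall>x. f (cover x) = cover (F x)))"

definition closed_arc :: "complex set \<Rightarrow> bool" where
  "closed_arc C \<longleftrightarrow> (\<exists>s t. s < t \<and> t < s + 1 \<and> C = cover ` {s..t})"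

definition union_of_closed_arcs :: "complex set \<Rightarrow> nat \<Rightarrow> bool" where
  "union_of_closed_arcs A k \<longleftrightarrow> (\<exists>C :: nat \<Rightarrow> complex set.
      (\<forall>i<k. closed_arc (C i)) \<and> (\<forall>i<k. \<forall>j<k. i \<noteq> j \<longrightarrow> C i \<inter> C j = {}) \<and>
      A = (\<Union>i<k. C i))"

definition gaps :: "complex set \<Rightarrow> complex set set" where
  "gaps X = components (circle - X)"

definition between :: "complex set \<Rightarrow> complex set \<Rightarrow> complex set \<Rightarrow> bool" where
  "between J C D \<longleftrightarrow> closure J \<inter> C \<noteq> {} \<and> closure J \<inter> D \<noteq> {}"

definition consecutive :: "complex set \<Rightarrow> complex set \<Rightarrow> complex set \<Rightarrow> bool" where
  "consecutive X C D \<longleftrightarrow> C \<in> components X \<and> D \<in> components X \<and> C \<noteq> D \<and>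
      (\<exists>J\<in>gaps X. between J C D)"

definition principal_gap :: "complex set \<Rightarrow> complex set \<Rightarrow> complex set \<Rightarrow> complex set \<Rightarrow> bool" where
  "principal_gap A B Bi J \<longleftrightarrow> J \<in> gaps (A \<union> B \<union> Bi) \<and>
      (\<exists>C\<in>components A. \<exists>D\<in>components B \<union> components Bi. between J C D)"

definition complementary_gap :: "complex set \<Rightarrow> complex set \<Rightarrow> complex set \<Rightarrow> complex set \<Rightarrow> bool" where
  "complementary_gap A B Bi J \<longleftrightarrow> J \<in> gaps (A \<union> B \<union> Bi) \<and>
      (\<exists>C\<in>components B. \<exists>D\<in>components Bi. between J C D)"

definition bblocks_union :: "complex set \<Rightarrow> complex set \<Rightarrow> complex set \<Rightarrow> complex set" where
  "bblocks_union A B Bi = B \<union> Bi \<union> \<Union>{J. complementary_gap A B Bi J}"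

definition gap_graph :: "(complex \<Rightarrow> complex) \<Rightarrow> (complex \<Rightarrow> complex) \<Rightarrow>
    complex set \<Rightarrow> complex set \<Rightarrow> complex set \<Rightarrow> (complex set \<times> complex set) set" where
  "gap_graph a b A B Bi =
     {(J, a ` J) | J. principal_gap A B Bi J} \<union>
     {(J, c ` J) | J c. principal_gap A B Bi J \<and> c \<in> {b, inv_into circle b} \<and>
                        principal_gap A B Bi (c ` J)}"

definition markov_system :: "(complex \<Rightarrow> complex) \<Rightarrow> (complex \<Rightarrow> complex) \<Rightarrow>
    complex set \<Rightarrow> complex set \<Rightarrow> complex set \<Rightarrow> nat \<Rightarrow> bool" where
  "markov_system a b A B Bi k \<longleftrightarrow>
     homeo_plus a \<and> homeo_plus b \<and>
     (\<forall>z\<in>circle. a (a z) = z) \<and> (\<exists>z\<in>circle. a z \<noteq> z) \<and>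
     (\<forall>z\<in>circle. b (b (b z)) = z) \<and> (\<exists>z\<in>circle. b z \<noteq> z) \<and>
     \<comment> \<open>(A)\<close>
     k \<ge> 1 \<and>
     union_of_closed_arcs A k \<and> union_of_closed_arcs B k \<and> union_of_closed_arcs Bi k \<and>
     A \<inter> B = {} \<and> A \<inter> Bi = {} \<and> B \<inter> Bi = {} \<and>
     \<comment> \<open>(B)\<close>
     (\<forall>C D. consecutive (A \<union> B \<union> Bi) C D \<longrightarrow>
        \<not> (C \<in> components A \<and> D \<in> components A) \<and>
        \<not> (C \<in> components B \<and> D \<in> components B) \<and>
        \<not> (C \<in> components Bi \<and> D \<in> components Bi)) \<and>
     \<comment> \<open>(C)\<close>
     a ` A = bblocks_union A B Bi \<and>
     \<comment> \<open>(D)\<close>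
     b ` A = B \<and> b ` B = Bi \<and>
     \<comment> \<open>(E)\<close>
     (\<forall>J. principal_gap A B Bi J \<longrightarrow> principal_gap A B Bi (a ` J)) \<and>
     (\<forall>J. principal_gap A B Bi J \<longrightarrow>
        (principal_gap A B Bi (b ` J) \<noteq> principal_gap A B Bi (inv_into circle b ` J))) \<and>
     (\<forall>J J'. principal_gap A B Bi J \<longrightarrow> principal_gap A B Bi J' \<longrightarrow>
        (J, J') \<in> (gap_graph a b A B Bi \<union> (gap_graph a b A B Bi)\<inverse>)\<^sup>*)"

text \<open>The group generated by a and b (as maps; elements are compared on S^1).\<close>

inductive_set gen_group :: "(complex \<Rightarrow> complex) \<Rightarrow> (complex \<Rightarrow> complex) \<Rightarrow> (complex \<Rightarrow> complex) set"
  for a b where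
    gen_id: "id \<in> gen_group a b"
  | gen_a: "g \<in> gen_group a b \<Longrightarrow> a \<circ> g \<in> gen_group a b"
  | gen_b: "g \<in> gen_group a b \<Longrightarrow> b \<circ> g \<in> gen_group a b"
  | gen_ainv: "g \<in> gen_group a b \<Longrightarrow> inv_into circle a \<circ> g \<in> gen_group a b"
  | gen_binv: "g \<in> gen_group a b \<Longrightarrow> inv_into circle b \<circ> g \<in> gen_group a b"

text \<open>markov_word a bs n = a o bs(n-1) o a o ... o a o bs 0; f_1 = markov_word a bs k.\<close>

fun markov_word :: "(complex \<Rightarrow> complex) \<Rightarrow> (nat \<Rightarrow> complex \<Rightarrow> complex) \<Rightarrow> nat \<Rightarrow> complex \<Rightarrow> complex" where
  "markov_word a bs 0 = id"
| "markov_word a bs (Suc n) = (a \<circ> bs n) \<circ> markov_word a bs n"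

definition int_pow :: "(complex \<Rightarrow> complex) \<Rightarrow> int \<Rightarrow> complex \<Rightarrow> complex" where
  "int_pow f n = (if 0 \<le> n then f ^^ nat n else inv_into circle f ^^ nat (- n))"

end

theory Submission
  imports Defs
begin


lemma cover_in: "cover x \<in> circle"
  by (simp add: cover_def circle_def)

lemma cover_surj: "z \<in> circle \<Longrightarrow> \<exists>x. z = cover x"
proof -
  assume z: "z \<in> circle"
  then have "z \<noteq> 0" "cmod z = 1" by (auto simp: circle_def)
  then have "cis (Arg z) = z" using cis_Arg by (simp add: sgn_div_norm)
  then show ?thesis by (intro exI[of _ "Arg z / (2*pi)"]) (simp add: cover_def)
qed

lemma range_cover: "range cover = circle"
  using cover_in cover_surj by blast

lemma cover_eq_iff: "cover x = cover y \<longleftrightarrow> (\<exists>n::int. x = y + n)"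
proof -
  have "cover x = cover y \<longleftrightarrow> exp (\<i> * complex_of_real (2*pi*x)) = exp (\<i> * complex_of_real (2*pi*y))"
    by (simp add: cover_def cis_conv_exp)
  also have "\<dots> \<longleftrightarrow> (\<exists>n::int. \<i> * complex_of_real (2*pi*x) = \<i> * complex_of_real (2*pi*y) + (of_int (2 * n) * pi) * \<i>)"
    by (rule exp_eq)
  also have "\<dots> \<longleftrightarrow> (\<exists>n::int. x = y + n)"
  proof (intro ex_cong1)
    fix n :: int
    have "\<i> * complex_of_real (2*pi*x) = \<i> * complex_of_real (2*pi*y) + (of_int (2 * n) * pi) * \<i>
       \<longleftrightarrow> \<i> * complex_of_real (2*pi*x) = \<i> * complex_of_real (2*pi*y + 2*pi*n)"
      by (simp add: algebra_simps)
    also have "\<dots> \<longleftrightarrow> complex_of_real (2*pi*x) = complex_of_real (2*pi*y + 2*pi*n)"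
      by (simp only: mult_cancel_left) simp
    also have "\<dots> \<longleftrightarrow> 2*pi*x = 2*pi*(y + n)" by (simp only: of_real_eq_iff) (simp add: algebra_simps)
    also have "\<dots> \<longleftrightarrow> x = y + n" by simp
    finally show "(\<i> * complex_of_real (2*pi*x) = \<i> * complex_of_real (2*pi*y) + (of_int (2 * n) * pi) * \<i>) = (x = y + n)" .
  qed
  finally show ?thesis .
qed

lemma cover_add_int: "cover (x + of_int n) = cover x"
  using cover_eq_iff by blast

lemma continuous_cover: "continuous_on S cover"
  unfolding cover_def by (intro continuous_intros)

lemma homeo_plus_circle: "homeo_plus f \<Longrightarrow> z \<in> circle \<Longrightarrow> f z \<in> circle"
  unfolding homeo_plus_def using cover_surj cover_in by metis

lemma cover_01: "cover ` {0..1} = circle"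
proof
  show "cover ` {0..1} \<subseteq> circle" using cover_in by auto
  show "circle \<subseteq> cover ` {0..1}"
  proof
    fix z assume "z \<in> circle"
    then obtain x where x: "z = cover x" using cover_surj by blast
    have "cover (x - floor x) = cover x"
      using cover_add_int[of x "- floor x"] by simp
    moreover have "x - floor x \<in> {0..1}"
      by (simp add: less_imp_le) linarith
    ultimately show "z \<in> cover ` {0..1}" using x by (metis image_eqI)
  qed
qed

lemma homeo_plus_cont:
  assumes "homeo_plus f" shows "continuous_on circle f"
proof -
  obtain F where F: "continuous_on UNIV F" "\<forall>x. f (cover x) = cover (F x)"
    using assms unfolding homeo_plus_def by blast
  have fc: "f ` circle \<subseteq> circle" using homeo_plus_circle assms by blast
  show ?thesis
  proof (subst continuous_on_open_gen[where T=circle])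
    show "f \<in> circle \<rightarrow> circle" using fc by auto
    show "\<forall>U. openin (top_of_set circle) U \<longrightarrow> openin (top_of_set circle) (circle \<inter> f -` U)"
    proof (intro allI impI)
      fix U assume U: "openin (top_of_set circle) U"
      have q: "openin (top_of_set {0..1}) ({0..1} \<inter> cover -` V) \<longleftrightarrow> openin (top_of_set circle) V"
        if "V \<subseteq> circle" for V
        using Abstract_Topology_2.continuous_imp_quotient_map[OF continuous_cover cover_01 compact_Icc that] .
      have cF: "continuous_on {0..1} (cover \<circ> F)"
        by (intro continuous_on_compose continuous_cover continuous_on_subset[OF F(1)]) auto
      have eq: "{0..1} \<inter> cover -` (circle \<inter> f -` U) = {0..1} \<inter> (cover \<circ> F) -` U"
        using F(2) cover_in by auto
      have "openin (top_of_set {0..1}) ({0..1} \<inter> (cover \<circ> F) -` U)"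
        using continuous_on_open_gen[of "cover \<circ> F" "{0..1}" circle] cF U cover_in by auto
      then show "openin (top_of_set circle) (circle \<inter> f -` U)"
        using q[of "circle \<inter> f -` U"] eq by auto
    qed
  qed
qed



lemma closed_arc_sub: "closed_arc C \<Longrightarrow> C \<subseteq> circle"
  unfolding closed_arc_def using cover_in by auto

lemma closed_arc_compact: "closed_arc C \<Longrightarrow> compact C"
  unfolding closed_arc_def by (auto intro!: compact_continuous_image continuous_cover)

lemma closed_arc_ne: "closed_arc C \<Longrightarrow> C \<noteq> {}"
  unfolding closed_arc_def by auto

lemma uca_props:
  assumes "union_of_closed_arcs S k" "k \<ge> 1"
  shows "S \<subseteq> circle" "compact S" "S \<noteq> {}"
proof -
  obtain C where C: "\<forall>i<k. closed_arc (C i)" "S = (\<Union>i<k. C i)"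
    using assms unfolding union_of_closed_arcs_def by blast
  show "S \<subseteq> circle" using C closed_arc_sub by auto
  show "compact S" using C closed_arc_compact by (auto intro!: compact_UN)
  show "S \<noteq> {}" using C closed_arc_ne assms(2) by fastforce
qed

lemma component_of_closed_union:
  assumes S: "closed S" and T: "closed T" and d: "S \<inter> T = {}" and x: "x \<in> S"
  shows "connected_component_set (S \<union> T) x = connected_component_set S x"
proof
  let ?K = "connected_component_set (S \<union> T) x"
  have Kc: "connected ?K" by simp
  have Ks: "?K \<subseteq> S \<union> T" by (rule connected_component_subset)
  have xK: "x \<in> ?K" using x by simp
  have "?K \<subseteq> S"
  proof (rule ccontr)
    assume "\<not> ?K \<subseteq> S"
    then have "T \<inter> ?K \<noteq> {}" using Ks by auto
    moreover have "S \<inter> ?K \<noteq> {}" using xK x by auto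
    ultimately show False using Kc S T d Ks unfolding connected_closed
      apply (simp only: not_ex)
      apply (erule allE[of _ S], erule allE[of _ T]) by blast
  qed
  then show "?K \<subseteq> connected_component_set S x"
    using connected_component_maximal[OF xK Kc] by blast
  show "connected_component_set S x \<subseteq> ?K" by (rule connected_component_mono) auto
qed

lemma components_closed_union:
  assumes S: "closed S" and T: "closed T" and d: "S \<inter> T = {}" and C: "C \<in> components (S \<union> T)"
  shows "C \<in> components S \<or> C \<in> components T"
proof -
  obtain x where x: "x \<in> S \<union> T" "C = connected_component_set (S \<union> T) x"
    using C by (auto simp: components_def)
  show ?thesis
  proof (cases "x \<in> S")
    case True
    then show ?thesis using component_of_closed_union[OF S T d True] x by (auto simp: components_def)
  next
    case False
    then have "x \<in> T" using x by auto
    then show ?thesis using component_of_closed_union[OF T S _ \<open>x \<in> T\<close>] d x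
      by (auto simp: components_def Un_commute Int_commute)
  qed
qed

lemma homeo_components:
  assumes fc: "continuous_on U f" and gc: "continuous_on U g"
    and fT: "f ` T \<subseteq> T" and gT: "g ` T \<subseteq> T" and TU: "T \<subseteq> U"
    and gf: "\<And>z. z \<in> U \<Longrightarrow> g (f z) = z" and fg: "\<And>z. z \<in> U \<Longrightarrow> f (g z) = z"
    and G: "G \<in> components T"
  shows "f ` G \<in> components T"
proof -
  have GT: "G \<subseteq> T" using G in_components_subset by blast
  have Gc: "connected G" using G in_components_connected by blast
  have Gne: "G \<noteq> {}" using G in_components_nonempty by blast
  have fGc: "connected (f ` G)"
    using connected_continuous_image[OF continuous_on_subset[OF fc] Gc] GT TU by blast
  obtain G' where G': "G' \<in> components T" "f ` G \<subseteq> G'"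
    using exists_component_superset[of "f ` G" T] fGc GT fT Gne by blast
  have G'T: "G' \<subseteq> T" using G' in_components_subset by blast
  have gG'c: "connected (g ` G')"
    using connected_continuous_image[OF continuous_on_subset[OF gc] in_components_connected[OF G'(1)]] G'T TU by blast
  have "G \<inter> g ` G' \<noteq> {}"
  proof -
    obtain z where z: "z \<in> G" using Gne by blast
    then have "g (f z) = z" using gf GT TU by blast
    then show ?thesis using z G' by force
  qed
  then have gsub: "g ` G' \<subseteq> G"
    using components_maximal[OF G gG'c] gT G'T by blast
  have "G' \<subseteq> f ` G"
  proof
    fix y assume y: "y \<in> G'"
    then have "y = f (g y)" using fg G'T TU by auto
    moreover have "g y \<in> G" using y gsub by auto
    ultimately show "y \<in> f ` G" by blast
  qed
  then have "f ` G = G'" using G' by auto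
  then show ?thesis using G' by simp
qed



lemma cover_reduce: "\<exists>y'. cover y' = cover y \<and> l \<le> y' \<and> y' < l + 1"
proof -
  define y' where "y' = y + of_int (- floor (y - l))"
  have "cover y' = cover y" unfolding y'_def by (rule cover_add_int)
  moreover have "l \<le> y'" "y' < l + 1" unfolding y'_def by linarith+
  ultimately show ?thesis by blast
qed

lemma cover_inj_short: "inj_on cover {p..q}" if "q < p + 1" for p q
proof
  fix x y assume xy: "x \<in> {p..q}" "y \<in> {p..q}" "cover x = cover y"
  then obtain n :: int where n: "x = y + n" using cover_eq_iff by blast
  then have "\<bar>real_of_int n\<bar> < 1" using xy that by auto
  then have "n = 0" by linarith
  then show "x = y" using n by simp
qed

lemma gap_two_components:
  assumes Xc: "X \<subseteq> circle" and Xcl: "closed X"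
    and S1: "closed S1" and S2: "closed S2" and X12: "X = S1 \<union> S2" and d: "S1 \<inter> S2 = {}"
    and ne1: "S1 \<noteq> {}" and ne2: "S2 \<noteq> {}"
    and G: "G \<in> components (circle - X)"
  shows "\<exists>C D. C \<in> components X \<and> D \<in> components X \<and> C \<noteq> D \<and>
           closure G \<inter> C \<noteq> {} \<and> closure G \<inter> D \<noteq> {}"
proof -
  have Xnc: "\<not> connected X"
    unfolding connected_closed using S1 S2 X12 d ne1 ne2 by blast
  obtain z where zG: "z \<in> G" using G in_components_nonempty by blast
  have GX: "G \<subseteq> circle - X" using G in_components_subset by blast
  then obtain x0 where x0: "z = cover x0" using zG cover_surj by blast
  define T where "T = cover -` X"
  have Tcl: "closed T" unfolding T_def by (rule closed_vimage[OF Xcl continuous_cover])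
  have x0T: "x0 \<notin> T" using zG GX x0 T_def by auto
  have Xne: "X \<noteq> {}" using X12 ne1 by blast
  then obtain s where s: "cover s \<in> X" using Xc cover_surj by blast
  define s' where "s' = s + of_int (ceiling (x0 - s))"
  have s'T: "s' \<in> T" unfolding T_def s'_def using s cover_add_int by simp
  have s'b: "x0 \<le> s'" "s' < x0 + 1" unfolding s'_def by linarith+
  have s'1T: "s' - 1 \<in> T" using s'T cover_add_int[of s' "-1"] unfolding T_def by simp
  define S1' where "S1' = T \<inter> {x0..}"
  define u where "u = Inf S1'"
  have S1'ne: "S1' \<noteq> {}" using s'T s'b S1'_def by auto
  have S1'b: "bdd_below S1'" unfolding S1'_def by (rule bdd_belowI[of _ x0]) auto
  have uS: "u \<in> S1'" unfolding u_def
    by (rule closed_contains_Inf[OF S1'ne S1'b]) (simp add: S1'_def Tcl closed_Int)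
  have uT: "u \<in> T" and ux0: "x0 < u"
    using uS x0T unfolding S1'_def by (auto simp: le_less)
  have below_u: "t \<notin> T" if "x0 \<le> t" "t < u" for t
  proof
    assume "t \<in> T"
    then have "u \<le> t" unfolding u_def using cInf_lower[OF _ S1'b, of t] that S1'_def by auto
    then show False using that by simp
  qed
  define S2' where "S2' = T \<inter> {..x0}"
  define l where "l = Sup S2'"
  have S2'ne: "S2' \<noteq> {}" using s'1T s'b S2'_def by auto
  have S2'b: "bdd_above S2'" unfolding S2'_def by (rule bdd_aboveI[of _ x0]) auto
  have lS: "l \<in> S2'" unfolding l_def
    by (rule closed_contains_Sup[OF S2'ne S2'b]) (simp add: S2'_def Tcl closed_Int)
  have lT: "l \<in> T" and lx0: "l < x0"
    using lS x0T unfolding S2'_def by (auto simp: le_less)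
  have above_l: "t \<notin> T" if "l < t" "t \<le> x0" for t
  proof
    assume "t \<in> T"
    then have "t \<le> l" unfolding l_def using cSup_upper[OF _ S2'b, of t] that S2'_def by auto
    then show False using that by simp
  qed
  have gapT: "t \<notin> T" if "l < t" "t < u" for t
    using below_u above_l that by (cases "t \<le> x0") auto
  have l1T: "l + 1 \<in> T" using lT cover_add_int[of l 1] unfolding T_def by simp
  have ul1: "u \<le> l + 1"
  proof -
    have "s' - 1 \<le> l" unfolding l_def using cSup_upper[OF _ S2'b] s'1T s'b S2'_def by auto
    then have "l + 1 \<in> S1'" using l1T s'b S1'_def by auto
    then show ?thesis unfolding u_def using cInf_lower[OF _ S1'b] by blast
  qed
  have ul1s: "u < l + 1"
  proof (rule ccontr)
    assume "\<not> u < l + 1"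
    then have ueq: "u = l + 1" using ul1 by simp
    have "X \<subseteq> {cover l}"
    proof
      fix w assume w: "w \<in> X"
      then obtain y where y: "w = cover y" using Xc cover_surj by blast
      obtain y' where y': "cover y' = cover y" "l \<le> y'" "y' < l + 1" using cover_reduce by blast
      have "y' \<in> T" using y' y w T_def by auto
      then have "y' = l" using gapT[of y'] y' ueq by force
      then show "w \<in> {cover l}" using y y' by simp
    qed
    then have "X = {cover l}" using Xne by blast
    then show False using Xnc by simp
  qed
  define Oa where "Oa = cover ` {l<..<u}"
  have OaX: "Oa \<inter> X = {}" unfolding Oa_def using gapT T_def by auto
  have Oac: "connected Oa" unfolding Oa_def
    by (intro connected_continuous_image continuous_cover) auto
  have zOa: "z \<in> Oa" unfolding Oa_def using x0 lx0 ux0 by auto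
  have OaG: "Oa \<subseteq> G"
    using components_maximal[OF G Oac] OaX zOa zG cover_in unfolding Oa_def by blast
  have "cover ` closure {l<..<u} \<subseteq> closure Oa"
    by (rule image_closure_subset[OF continuous_cover]) (auto simp: Oa_def intro: closure_subset[THEN subsetD])
  then have lu_cl: "cover ` {l..u} \<subseteq> closure G"
    using lx0 ux0 closure_mono[OF OaG] by auto
  have clG_l: "cover l \<in> closure G" and clG_u: "cover u \<in> closure G"
    using lu_cl lx0 ux0 by auto
  define C where "C = connected_component_set X (cover l)"
  define D where "D = connected_component_set X (cover u)"
  have lX: "cover l \<in> X" and uX: "cover u \<in> X" using lT uT T_def by auto
  have CX: "C \<in> components X" "D \<in> components X" using lX uX C_def D_def
    by (auto simp: components_def)
  have lC: "cover l \<in> C" and uD: "cover u \<in> D" using lX uX C_def D_def by auto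
  have outside: "w \<in> cover ` {u..l+1}" if wc: "w \<in> circle" "w \<notin> Oa" for w
  proof -
    obtain y where y: "w = cover y" using wc cover_surj by blast
    obtain y' where y': "cover y' = cover y" "l \<le> y'" "y' < l + 1" using cover_reduce by blast
    show ?thesis
    proof (cases "y' = l")
      case True
      then have "w = cover (l + 1)" using y y' cover_add_int[of l 1] by simp
      then show ?thesis using ul1 by auto
    next
      case False
      have "\<not> y' < u"
      proof
        assume "y' < u"
        then have "y' \<in> {l<..<u}" using False y' by auto
        then have "w \<in> Oa" using y y' Oa_def by (metis image_eqI)
        then show False using wc by simp
      qed
      then have "y' \<in> {u..l+1}" using y' by auto
      then show ?thesis using y y' by (metis image_eqI)
    qed
  qed
  have "C \<noteq> D"
  proof
    assume CD: "C = D"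
    have Cc: "connected C" unfolding C_def by simp
    have CsX: "C \<subseteq> X" unfolding C_def by (rule connected_component_subset)
    have Csub: "C \<subseteq> cover ` {u..l+1}"
    proof
      fix w assume "w \<in> C"
      then have "w \<in> X" using CsX by blast
      then have "w \<in> circle" "w \<notin> Oa" using OaX Xc by auto
      then show "w \<in> cover ` {u..l+1}" by (rule outside)
    qed
    obtain g where g: "homeomorphism {u..l+1} (cover ` {u..l+1}) cover g"
    proof -
      have "inj_on cover {u..l+1}" by (rule cover_inj_short) (use lx0 ux0 in simp)
      then show ?thesis using homeomorphism_compact[OF compact_Icc continuous_cover refl] that by blast
    qed
    have gc: "continuous_on (cover ` {u..l+1}) g" by (rule homeomorphism_cont2[OF g])
    have gcov: "\<And>x. x \<in> {u..l+1} \<Longrightarrow> g (cover x) = x" by (rule homeomorphism_apply1[OF g])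
    have gCc: "connected (g ` C)"
      by (rule connected_continuous_image[OF continuous_on_subset[OF gc Csub] Cc])
    have "u \<in> {u..l+1}" using ul1 by simp
    then have "g (cover u) = u" using gcov by blast
    then have "u \<in> g ` C" using uD CD by (simp add: rev_image_eqI)
    moreover have "l + 1 \<in> {u..l+1}" using ul1 by simp
    then have "g (cover (l+1)) = l+1" using gcov by blast
    moreover have "cover (l+1) = cover l" using cover_add_int[of l 1] by simp
    ultimately have "g (cover l) = l + 1" by simp
    then have "l + 1 \<in> g ` C" using lC by (simp add: rev_image_eqI)
    moreover note \<open>u \<in> g ` C\<close>
    ultimately have "{u..l+1} \<subseteq> g ` C" by (intro connected_contains_Icc[OF gCc])
    then have "cover ` {u..l+1} \<subseteq> C"
    proof -
      assume sub: "{u..l+1} \<subseteq> g ` C"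
      show ?thesis
      proof
        fix w assume "w \<in> cover ` {u..l+1}"
        then obtain x where x: "x \<in> {u..l+1}" "w = cover x" by blast
        then obtain c where c: "c \<in> C" "x = g c" using sub by blast
        have "cover (g c) = c" using c Csub by (intro homeomorphism_apply2[OF g]) blast
        then show "w \<in> C" using c x by simp
      qed
    qed
    then have "X \<subseteq> C"
    proof -
      assume cs: "cover ` {u..l+1} \<subseteq> C"
      show "X \<subseteq> C"
      proof
        fix w assume "w \<in> X"
        then have "w \<in> circle" "w \<notin> Oa" using OaX Xc by auto
        then have "w \<in> cover ` {u..l+1}" by (rule outside)
        then show "w \<in> C" using cs by blast
      qed
    qed
    then have "X = C" using CsX by blast
    then show False using Xnc Cc by simp
  qed
  then show ?thesis using CX lC uD clG_l clG_u by blast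
qed



locale MS =
  fixes a b :: "complex \<Rightarrow> complex" and A B Bi :: "complex set" and k :: nat
  assumes M: "markov_system a b A B Bi k"
begin

definition "X = A \<union> B \<union> Bi"
definition "P = {J. principal_gap A B Bi J}"
definition "Q = \<Union>P"
definition "Z2 = circle - A - Q"
abbreviation "bi \<equiv> inv_into circle b"

lemma hpa: "homeo_plus a" and hpb: "homeo_plus b"
  using M unfolding markov_system_def by auto

lemma a_c: "z \<in> circle \<Longrightarrow> a z \<in> circle" using homeo_plus_circle hpa by blast
lemma b_c: "z \<in> circle \<Longrightarrow> b z \<in> circle" using homeo_plus_circle hpb by blast
lemma aa: "z \<in> circle \<Longrightarrow> a (a z) = z" using M unfolding markov_system_def by auto
lemma bbb: "z \<in> circle \<Longrightarrow> b (b (b z)) = z" using M unfolding markov_system_def by auto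

lemma a_inj: "inj_on a circle" by (metis aa inj_onI)
lemma b_inj: "inj_on b circle" by (metis bbb inj_onI)
lemma b_surj: "b ` circle = circle"
proof
  show "b ` circle \<subseteq> circle" using b_c by auto
  show "circle \<subseteq> b ` circle"
  proof
    fix z assume z: "z \<in> circle"
    then have "z = b (b (b z))" using bbb by simp
    then show "z \<in> b ` circle" using z b_c by blast
  qed
qed

lemma bi_eq: "z \<in> circle \<Longrightarrow> bi z = b (b z)"
  by (rule inv_into_f_eq[OF b_inj]) (auto simp: b_c bbb)
lemma bi_c: "z \<in> circle \<Longrightarrow> bi z \<in> circle" using bi_eq b_c by simp
lemma inv_a_eq: "z \<in> circle \<Longrightarrow> inv_into circle a z = a z"
  by (rule inv_into_f_eq[OF a_inj]) (auto simp: a_c aa)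
lemma b_bi: "z \<in> circle \<Longrightarrow> b (bi z) = z" using bi_eq bbb by simp
lemma bi_b: "z \<in> circle \<Longrightarrow> bi (b z) = z" using bi_eq bbb b_c by simp

lemma kge: "k \<ge> 1" using M unfolding markov_system_def by auto
lemma uA: "union_of_closed_arcs A k" and uB: "union_of_closed_arcs B k" and uBi: "union_of_closed_arcs Bi k"
  using M unfolding markov_system_def by auto
lemma A_c: "A \<subseteq> circle" and B_c: "B \<subseteq> circle" and Bi_c: "Bi \<subseteq> circle"
  using uca_props(1) uA uB uBi kge by auto
lemma A_cl: "closed A" and B_cl: "closed B" and Bi_cl: "closed Bi"
  using uca_props(2) uA uB uBi kge compact_imp_closed by auto
lemma A_ne: "A \<noteq> {}" and B_ne: "B \<noteq> {}" and Bi_ne: "Bi \<noteq> {}"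
  using uca_props(3) uA uB uBi kge by auto
lemma disj: "A \<inter> B = {}" "A \<inter> Bi = {}" "B \<inter> Bi = {}"
  using M unfolding markov_system_def by auto
lemma bA: "b ` A = B" and bB: "b ` B = Bi"
  using M unfolding markov_system_def by auto
lemma aA: "a ` A = bblocks_union A B Bi"
  using M unfolding markov_system_def by auto

lemma bBi: "b ` Bi = A"
proof -
  have "b ` Bi = (\<lambda>z. b (b (b z))) ` A" using bA bB by (auto simp: image_image[symmetric])
  also have "\<dots> = A" using bbb A_c by (auto simp: image_def) (metis subsetD)
  finally show ?thesis .
qed

lemma bi_img: "S \<subseteq> circle \<Longrightarrow> bi ` (b ` S) = S"
  using inv_into_image_cancel[OF b_inj] by blast
lemma b_img: "S \<subseteq> circle \<Longrightarrow> b ` (bi ` S) = S"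
  using b_bi by (force simp: image_def)

lemma biA: "bi ` A = Bi" using bi_img[OF Bi_c] bBi by simp

lemma X_c: "X \<subseteq> circle" using A_c B_c Bi_c X_def by auto
lemma X_cl: "closed X" using A_cl B_cl Bi_cl X_def by auto

lemma bX: "b ` X = X" unfolding X_def image_Un bA bB bBi by blast
lemma biX: "bi ` X = X" using bi_img[OF X_c] bX by simp

lemma b_cont: "continuous_on circle b" by (rule homeo_plus_cont[OF hpb])
lemma bi_cont: "continuous_on circle bi"
proof -
  have "continuous_on circle (b \<circ> b)"
    by (rule continuous_on_compose[OF b_cont]) (rule continuous_on_subset[OF b_cont], use b_c in auto)
  then show ?thesis by (rule continuous_on_cong[THEN iffD1, rotated -1]) (auto simp: bi_eq)
qed

lemma b_compl: "b ` (circle - X) \<subseteq> circle - X"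
proof
  fix w assume "w \<in> b ` (circle - X)"
  then obtain z where z: "z \<in> circle" "z \<notin> X" "w = b z" by blast
  have "w \<notin> X"
  proof
    assume "w \<in> X"
    then have "bi w \<in> X" using biX by blast
    then show False using z bi_b by simp
  qed
  then show "w \<in> circle - X" using z b_c by simp
qed

lemma bi_compl: "bi ` (circle - X) \<subseteq> circle - X"
proof
  fix w assume "w \<in> bi ` (circle - X)"
  then obtain z where z: "z \<in> circle" "z \<notin> X" "w = bi z" by blast
  have "w \<notin> X"
  proof
    assume "w \<in> X"
    then have "b w \<in> X" using bX by blast
    then show False using z b_bi by simp
  qed
  then show "w \<in> circle - X" using z bi_c by simp
qed

lemma gap_b: "G \<in> gaps X \<Longrightarrow> b ` G \<in> gaps X"
  unfolding gaps_def
  by (rule homeo_components[OF b_cont bi_cont b_compl bi_compl _ bi_b b_bi]) auto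

lemma gap_bi: "G \<in> gaps X \<Longrightarrow> bi ` G \<in> gaps X"
  unfolding gaps_def
  by (rule homeo_components[OF bi_cont b_cont bi_compl b_compl _ b_bi bi_b]) auto

lemma gap_sub: "G \<in> gaps X \<Longrightarrow> G \<subseteq> circle - X"
  unfolding gaps_def using in_components_subset by blast

lemma comp_types: "C \<in> components X \<Longrightarrow> C \<in> components A \<or> C \<in> components B \<or> C \<in> components Bi"
proof -
  assume C: "C \<in> components X"
  have "C \<in> components (A \<union> B) \<or> C \<in> components Bi"
    by (rule components_closed_union) (use C A_cl B_cl Bi_cl disj X_def in auto)
  moreover have "C \<in> components (A \<union> B) \<Longrightarrow> C \<in> components A \<or> C \<in> components B"
    by (rule components_closed_union) (use A_cl B_cl disj in auto)
  ultimately show ?thesis by blast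
qed

lemma condB: "consecutive X C D \<Longrightarrow>
        \<not> (C \<in> components A \<and> D \<in> components A) \<and>
        \<not> (C \<in> components B \<and> D \<in> components B) \<and>
        \<not> (C \<in> components Bi \<and> D \<in> components Bi)"
  using M unfolding markov_system_def X_def by blast

lemma classify: "G \<in> gaps X \<Longrightarrow> principal_gap A B Bi G \<or> complementary_gap A B Bi G"
proof -
  assume G: "G \<in> gaps X"
  obtain C D where CD: "C \<in> components X" "D \<in> components X" "C \<noteq> D"
    "closure G \<inter> C \<noteq> {}" "closure G \<inter> D \<noteq> {}"
  proof -
    have "closed (B \<union> Bi)" using B_cl Bi_cl by auto
    moreover have "X = A \<union> (B \<union> Bi)" using X_def by auto
    moreover have "A \<inter> (B \<union> Bi) = {}" using disj by auto
    moreover have "B \<union> Bi \<noteq> {}" using B_ne by auto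
    moreover have "G \<in> components (circle - X)" using G gaps_def by simp
    ultimately show ?thesis using gap_two_components[OF X_c X_cl A_cl, of "B \<union> Bi" G] A_ne that by blast
  qed
  have btw: "between G C D" "between G D C" using CD unfolding between_def by auto
  have "consecutive X C D" unfolding consecutive_def using CD btw G by blast
  note nb = condB[OF this]
  have GX: "G \<in> gaps (A \<union> B \<union> Bi)" using G X_def by simp
  from comp_types[OF CD(1)] comp_types[OF CD(2)] nb btw GX show ?thesis
    unfolding principal_gap_def complementary_gap_def by blast
qed

lemma P_gap: "J \<in> P \<Longrightarrow> J \<in> gaps X" unfolding P_def principal_gap_def X_def by auto
lemma P_c: "J \<in> P \<Longrightarrow> J \<subseteq> circle" using P_gap gap_sub by blast
lemma P_ne: "J \<in> P \<Longrightarrow> J \<noteq> {}" using P_gap unfolding gaps_def using in_components_nonempty by blast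
lemma Q_X: "Q \<inter> X = {}" unfolding Q_def using P_gap gap_sub by blast
lemma P_Q: "J \<in> P \<Longrightarrow> J \<subseteq> Q" unfolding Q_def by blast

lemma aP: "J \<in> P \<Longrightarrow> a ` J \<in> P"
  using M unfolding markov_system_def P_def by blast

lemma aQ: "a ` Q \<subseteq> Q" unfolding Q_def using aP by blast

lemma bblocks_sub: "bblocks_union A B Bi \<subseteq> circle"
proof -
  have "bblocks_union A B Bi = a ` A" using aA by simp
  then show ?thesis using A_c a_c by auto
qed

lemma aZ2: "a ` Z2 \<subseteq> A"
proof
  fix w assume "w \<in> a ` Z2"
  then obtain z where z: "z \<in> circle" "z \<notin> A" "z \<notin> Q" "w = a z" unfolding Z2_def by blast
  have "z \<in> bblocks_union A B Bi"
  proof (cases "z \<in> X")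
    case True
    then show ?thesis using z unfolding X_def bblocks_union_def by auto
  next
    case False
    then have "z \<in> circle - X" using z by simp
    then obtain G where G: "G \<in> gaps X" "z \<in> G" unfolding gaps_def
      using Union_components[of "circle - X"] by blast
    have "\<not> principal_gap A B Bi G" using G z unfolding Q_def P_def by blast
    then have "complementary_gap A B Bi G" using classify[OF G(1)] by blast
    then show ?thesis using G unfolding bblocks_union_def by blast
  qed
  then obtain y where y: "y \<in> A" "z = a y" using aA by (metis imageE)
  then show "w \<in> A" using z aa A_c by auto
qed

lemma A_Q: "A \<inter> Q = {}" using Q_X X_def by blast

lemma bA_Z2: "b ` A \<subseteq> Z2" using bA B_c disj Q_X unfolding Z2_def X_def by blast
lemma biA_Z2: "bi ` A \<subseteq> Z2" using biA Bi_c disj Q_X unfolding Z2_def X_def by blast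
lemma Z2_Q: "Z2 \<inter> Q = {}" unfolding Z2_def by blast

lemma deviate:
  assumes J: "J \<in> P" and x: "x = b \<or> x = bi" and np: "x ` J \<notin> P"
  shows "x ` J \<subseteq> Z2"
proof -
  have g: "x ` J \<in> gaps X" using x gap_b gap_bi P_gap[OF J] by blast
  show ?thesis
  proof
    fix w assume w: "w \<in> x ` J"
    then have wc: "w \<in> circle - X" using gap_sub[OF g] by blast
    have "w \<notin> Q"
    proof
      assume "w \<in> Q"
      then obtain J' where J': "J' \<in> P" "w \<in> J'" unfolding Q_def by blast
      then have "x ` J = J'" using components_eq[of "x ` J" "circle - X" J'] g P_gap[OF J'(1)] w
        unfolding gaps_def by blast
      then show False using np J' by simp
    qed
    then show "w \<in> Z2" using wc X_def Z2_def by blast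
  qed
qed

lemma E2: "J \<in> P \<Longrightarrow> (b ` J \<in> P) \<noteq> (bi ` J \<in> P)"
  using M unfolding markov_system_def P_def by blast

end



datatype letter = La | Lb | Lbb

fun lev :: "(complex \<Rightarrow> complex) \<Rightarrow> (complex \<Rightarrow> complex) \<Rightarrow> letter \<Rightarrow> complex \<Rightarrow> complex" where
  "lev a b La = a"
| "lev a b Lb = b"
| "lev a b Lbb = inv_into circle b"

fun wev :: "(complex \<Rightarrow> complex) \<Rightarrow> (complex \<Rightarrow> complex) \<Rightarrow> letter list \<Rightarrow> complex \<Rightarrow> complex" where
  "wev a b [] = id"
| "wev a b (x # w) = lev a b x \<circ> wev a b w"

fun alt :: "letter list \<Rightarrow> bool" where
  "alt [] = True"
| "alt [x] = True"
| "alt (x # y # w) = ((x = La) \<noteq> (y = La) \<and> alt (y # w))"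

fun red_cons :: "letter \<Rightarrow> letter list \<Rightarrow> letter list" where
  "red_cons La (La # w) = w"
| "red_cons Lb (Lb # w) = Lbb # w"
| "red_cons Lb (Lbb # w) = w"
| "red_cons Lbb (Lbb # w) = Lb # w"
| "red_cons Lbb (Lb # w) = w"
| "red_cons x w = x # w"

lemma alt_tl: "alt (x # w) \<Longrightarrow> alt w"
  by (cases w) auto

lemma wev_append: "wev a b (u @ v) = wev a b u \<circ> wev a b v"
  by (induction u) auto

lemma wev_in_group: "wev a b w \<in> gen_group a b"
proof (induction w)
  case Nil then show ?case using gen_group.gen_id by (simp add: id_def)
next
  case (Cons x w)
  have "lev a b x \<circ> wev a b w \<in> gen_group a b"
    using Cons gen_group.gen_a gen_group.gen_b gen_group.gen_binv by (cases x) (simp only: lev.simps; blast)+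
  then show ?case by (simp only: wev.simps)
qed

context MS begin

lemma lev_c: "z \<in> circle \<Longrightarrow> lev a b x z \<in> circle"
  by (cases x) (auto simp: a_c b_c bi_c)

lemma wev_c: "z \<in> circle \<Longrightarrow> wev a b w z \<in> circle"
  by (induction w) (auto simp: lev_c)

lemma alt_red_cons: "alt w \<Longrightarrow> alt (red_cons x w)"
proof (cases w)
  case Nil then show ?thesis by (cases x) auto
next
  case (Cons y w')
  assume aw: "alt w"
  then have aw': "alt w'" using Cons alt_tl by blast
  show ?thesis using aw aw' Cons
    by (cases x; cases y; cases w') auto
qed

lemma red_cons_ev: "z \<in> circle \<Longrightarrow> wev a b (red_cons x w) z = lev a b x (wev a b w z)"
proof -
  assume z: "z \<in> circle"
  have c: "wev a b w' z \<in> circle" for w' using wev_c z by blast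
  show ?thesis
  proof (cases w)
    case Nil then show ?thesis by (cases x) auto
  next
    case (Cons y w')
    have c': "wev a b w' z \<in> circle" using c by blast
    show ?thesis using Cons c'
      by (cases x; cases y) (auto simp: aa bi_eq b_c bbb)
  qed
qed

lemma normalize: "g \<in> gen_group a b \<Longrightarrow> \<exists>w. alt w \<and> (\<forall>z\<in>circle. g z = wev a b w z)"
proof (induction rule: gen_group.induct)
  case gen_id
  then show ?case by (intro exI[of _ "[]"]) auto
next
  case (gen_a g)
  then obtain w where w: "alt w" "\<forall>z\<in>circle. g z = wev a b w z" by blast
  show ?case using w alt_red_cons red_cons_ev by (intro exI[of _ "red_cons La w"]) auto
next
  case (gen_b g)
  then obtain w where w: "alt w" "\<forall>z\<in>circle. g z = wev a b w z" by blast
  show ?case using w alt_red_cons red_cons_ev by (intro exI[of _ "red_cons Lb w"]) auto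
next
  case (gen_ainv g)
  then obtain w where w: "alt w" "\<forall>z\<in>circle. g z = wev a b w z" by blast
  show ?case using w alt_red_cons red_cons_ev inv_a_eq wev_c
    by (intro exI[of _ "red_cons La w"]) auto
next
  case (gen_binv g)
  then obtain w where w: "alt w" "\<forall>z\<in>circle. g z = wev a b w z" by blast
  show ?case using w alt_red_cons red_cons_ev by (intro exI[of _ "red_cons Lbb w"]) auto
qed

end



locale MS2 = MS +
  fixes I I' :: "nat \<Rightarrow> complex set" and bs :: "nat \<Rightarrow> complex \<Rightarrow> complex"
  assumes enum: "{J. principal_gap A B Bi J} = I ` {..<k} \<union> I' ` {..<k}"
    and injI: "inj_on I {..<k}" and injI': "inj_on I' {..<k}"
    and disjI: "I ` {..<k} \<inter> I' ` {..<k} = {}"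
    and bsA: "\<forall>i<k. bs i \<in> {b, inv_into circle b} \<and> bs i ` I i = I' i \<and> a ` I' i = I (Suc i mod k)"
begin

definition "K2 = 2 * int k"
definition "Gn j = (if even j then I (j div 2) else I' (j div 2))"
definition "bl i = (if bs i = b then Lb else Lbb)"
definition "blinv i = (if bs i = b then Lbb else Lb)"
definition "fwdn j = (if even j then bl (j div 2) else La)"
definition "bwdn j = (if odd j then blinv (j div 2) else La)"
definition "pos p = nat (p mod K2)"
definition "gp p = Gn (pos p)"
definition "fwd p = fwdn (pos p)"
definition "bwd p = bwdn (pos p)"

lemma K2pos: "K2 > 0" using kge K2_def by simp

lemma pos_lt: "pos p < 2 * k"
proof -
  have "p mod K2 < K2" "0 \<le> p mod K2" using K2pos by auto
  then show ?thesis unfolding pos_def K2_def by linarith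
qed

lemma int_pos: "int (pos p) = p mod K2"
  unfolding pos_def using K2pos by simp

lemma pos_suc: "pos (p + 1) = Suc (pos p) mod (2 * k)"
proof -
  have "(p + 1) mod K2 = (p mod K2 + 1) mod K2" by (simp add: mod_add_left_eq)
  also have "\<dots> = (int (pos p) + 1) mod int (2*k)" by (simp add: int_pos K2_def)
  also have "\<dots> = int (Suc (pos p) mod (2*k))" by (simp add: zmod_int add.commute)
  finally show ?thesis unfolding pos_def by simp
qed

lemma pos_pred: "pos (p - 1) = (pos p + (2*k - 1)) mod (2 * k)"
proof -
  have "(p - 1) mod K2 = (p mod K2 + (K2 - 1)) mod K2"
  proof -
    have "(p - 1) mod K2 = (p + (K2 - 1) + (-1) * K2) mod K2" by simp
    also have "\<dots> = (p + (K2 - 1)) mod K2" by (simp only: mod_mult_self1)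
    also have "\<dots> = (p mod K2 + (K2 - 1)) mod K2" by (simp add: mod_add_left_eq)
    finally show ?thesis .
  qed
  also have "\<dots> = (int (pos p) + int (2*k - 1)) mod int (2*k)" using kge by (simp add: int_pos K2_def of_nat_diff)
  also have "\<dots> = int ((pos p + (2*k - 1)) mod (2*k))" by (simp add: zmod_int)
  finally show ?thesis unfolding pos_def by simp
qed

lemma pos_period: "pos (p + K2 * n) = pos p"
  unfolding pos_def by simp

lemma pos_parity: "even (pos p) \<longleftrightarrow> even p"
proof -
  have "p = p mod K2 + (p div K2) * K2" by simp
  then have "p = int (pos p) + 2 * ((p div K2) * int k)" by (simp add: int_pos K2_def)
  then obtain y where y: "p = int (pos p) + 2 * y" by blast
  have e2: "even (int (pos p) + 2 * y) \<longleftrightarrow> even (pos p)" by simp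
  show ?thesis using e2 by (simp only: y[symmetric])
qed

lemma bs_cases: "i < k \<Longrightarrow> bs i = b \<or> bs i = bi" using bsA by auto

lemma lev_bl: "i < k \<Longrightarrow> lev a b (bl i) = bs i"
  using bs_cases[of i] by (auto simp: bl_def)

lemma bl_ne: "bl i \<noteq> La" "blinv i \<noteq> La" "bl i \<noteq> blinv i"
  by (auto simp: bl_def blinv_def)

lemma fwd_La: "fwd p = La \<longleftrightarrow> odd p"
  unfolding fwd_def fwdn_def using pos_parity bl_ne by auto
lemma bwd_La: "bwd p = La \<longleftrightarrow> even p"
  unfolding bwd_def bwdn_def using pos_parity bl_ne by auto

lemma P_enum: "P = I ` {..<k} \<union> I' ` {..<k}" unfolding P_def using enum by simp

lemma G_P: "j < 2 * k \<Longrightarrow> Gn j \<in> P"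
proof -
  assume "j < 2 * k"
  then have d: "j div 2 < k" by simp
  then have "I (j div 2) \<in> P" "I' (j div 2) \<in> P" unfolding P_enum by auto
  then show ?thesis unfolding Gn_def by simp
qed
lemma gp_P: "gp p \<in> P" unfolding gp_def using G_P pos_lt by blast

lemma disj_II': "i < k \<Longrightarrow> i' < k \<Longrightarrow> I i \<noteq> I' i'"
proof
  assume "i < k" "i' < k" "I i = I' i'"
  then have "I i \<in> I ` {..<k} \<inter> I' ` {..<k}" by auto
  then show False using disjI by simp
qed

lemma G_inj: "j < 2 * k \<Longrightarrow> j' < 2 * k \<Longrightarrow> Gn j = Gn j' \<Longrightarrow> j = j'"
proof -
  assume j: "j < 2 * k" "j' < 2 * k" and e: "Gn j = Gn j'"
  have d: "j div 2 < k" "j' div 2 < k" using j by auto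
  show ?thesis
  proof (cases "even j"; cases "even j'")
    assume ev: "even j" "even j'"
    then have "I (j div 2) = I (j' div 2)" using e Gn_def by simp
    then have "j div 2 = j' div 2" using inj_onD[OF injI] d by simp
    moreover have "j = 2 * (j div 2)" "j' = 2 * (j' div 2)" using ev by presburger+
    ultimately show ?thesis by simp
  next
    assume "even j" "odd j'"
    then have "I (j div 2) = I' (j' div 2)" using e Gn_def by simp
    then show ?thesis using disj_II'[OF d(1) d(2)] by simp
  next
    assume "odd j" "even j'"
    then have "I (j' div 2) = I' (j div 2)" using e Gn_def by simp
    then show ?thesis using disj_II'[OF d(2) d(1)] by simp
  next
    assume od: "odd j" "odd j'"
    then have "I' (j div 2) = I' (j' div 2)" using e Gn_def by simp
    then have "j div 2 = j' div 2" using inj_onD[OF injI'] d by simp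
    moreover have "j = 2 * (j div 2) + 1" "j' = 2 * (j' div 2) + 1" using od by presburger+
    ultimately show ?thesis by simp
  qed
qed

lemma gp_inj: "gp p = gp q \<Longrightarrow> p mod K2 = q mod K2"
proof -
  assume "gp p = gp q"
  then have "pos p = pos q" using G_inj pos_lt unfolding gp_def by blast
  then show ?thesis using int_pos by metis
qed

lemma I_c: "i < k \<Longrightarrow> I i \<subseteq> circle" using G_P[of "2*i"] P_c by (simp add: Gn_def)
lemma I'_c: "i < k \<Longrightarrow> I' i \<subseteq> circle" using G_P[of "2*i+1"] P_c by (simp add: Gn_def)

lemma stepF_n: "j < 2 * k \<Longrightarrow> lev a b (fwdn j) ` Gn j = Gn (Suc j mod (2 * k))"
proof -
  assume j: "j < 2 * k"
  define i where "i = j div 2"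
  have ik: "i < k" using j i_def by simp
  show ?thesis
  proof (cases "even j")
    case True
    then have j2: "j = 2 * i" using i_def by simp
    then have "Suc j mod (2 * k) = 2 * i + 1" using j by simp
    then show ?thesis using True j2 bsA ik lev_bl[OF ik]
      by (simp add: fwdn_def Gn_def)
  next
    case False
    then have j2: "j = 2 * i + 1" using i_def by simp
    have "Suc j mod (2 * k) = 2 * (Suc i mod k)"
      using j2 by (simp add: mult_mod_right)
    moreover have "Suc i mod k < k" using kge by simp
    ultimately show ?thesis using False j2 bsA ik
      by (simp add: fwdn_def Gn_def)
  qed
qed

lemma stepB_n: "j < 2 * k \<Longrightarrow> lev a b (bwdn j) ` Gn j = Gn ((j + (2*k - 1)) mod (2 * k))"
proof -
  assume j: "j < 2 * k"
  define i where "i = j div 2"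
  have ik: "i < k" using j i_def by simp
  show ?thesis
  proof (cases "even j")
    case False
    then have j2: "j = 2 * i + 1" using i_def by simp
    have "(j + (2*k - 1)) mod (2 * k) = 2 * i"
    proof -
      have e: "j + (2*k - 1) = 2 * i + 2 * k" using j2 kge by simp
      have "2 * i < 2 * k" using ik by simp
      then show ?thesis unfolding e mod_add_self2 by (rule mod_less)
    qed
    moreover have "lev a b (blinv i) ` I' i = I i"
    proof (cases "bs i = b")
      case True
      moreover have "bs i ` I i = I' i" using bsA ik by blast
      ultimately have "I' i = b ` I i" by simp
      then show ?thesis using True bi_img[OF I_c[OF ik]] by (simp add: blinv_def)
    next
      case False
      then have "bs i = bi" using bs_cases ik by blast
      moreover have "bs i ` I i = I' i" using bsA ik by blast
      ultimately have "I' i = bi ` I i" by simp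
      then show ?thesis using False b_img[OF I_c[OF ik]] by (simp add: blinv_def)
    qed
    ultimately show ?thesis using False j2 by (simp add: bwdn_def Gn_def)
  next
    case True
    then have j2: "j = 2 * i" using i_def by simp
    define i' where "i' = (if i = 0 then k - 1 else i - 1)"
    have i'k: "i' < k" using ik i'_def by auto
    have si: "Suc i' mod k = i" using ik kge i'_def by auto
    have "(j + (2*k - 1)) mod (2 * k) = 2 * i' + 1"
    proof (cases "i = 0")
      case True
      then show ?thesis using j2 i'_def kge by simp
    next
      case False
      then have e: "j + (2*k - 1) = (2 * i' + 1) + 2 * k" using j2 i'_def kge by simp
      have "2 * i' + 1 < 2 * k" using i'k by simp
      then show ?thesis unfolding e mod_add_self2 by (rule mod_less)
    qed
    moreover have "a ` I i = I' i'"
    proof -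
      have "a ` I' i' = I i" using bsA i'k si by auto
      then have "a ` I i = a ` a ` I' i'" by simp
      also have "\<dots> = I' i'" using aa I'_c[OF i'k] by (auto simp: image_image) (metis image_eqI subsetD)+
      finally show ?thesis .
    qed
    ultimately show ?thesis using True j2 by (simp add: bwdn_def Gn_def)
  qed
qed

lemma stepF: "lev a b (fwd p) ` gp p = gp (p + 1)"
  unfolding fwd_def gp_def pos_suc using stepF_n[OF pos_lt] by simp

lemma stepB: "lev a b (bwd p) ` gp p = gp (p - 1)"
  unfolding bwd_def gp_def pos_pred using stepB_n[OF pos_lt] by simp

end



primrec Fw :: "(int \<Rightarrow> letter) \<Rightarrow> int \<Rightarrow> nat \<Rightarrow> letter list" where
  "Fw f q 0 = []"
| "Fw f q (Suc m) = f (q + int m) # Fw f q m"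

primrec Bw :: "(int \<Rightarrow> letter) \<Rightarrow> int \<Rightarrow> nat \<Rightarrow> letter list" where
  "Bw g q 0 = []"
| "Bw g q (Suc m) = g (q - int m) # Bw g q m"

lemma Fw_split: "Fw f q (m1 + m2) = Fw f (q + int m1) m2 @ Fw f q m1"
  by (induction m2) (auto simp: algebra_simps)

lemma Bw_split: "Bw g q (m1 + m2) = Bw g (q - int m1) m2 @ Bw g q m1"
  by (induction m2) (auto simp: algebra_simps)

lemma Fw_len: "length (Fw f q m) = m" by (induction m) auto
lemma Bw_len: "length (Bw f q m) = m" by (induction m) auto

lemma Fw_last: "last (Fw f q (Suc m)) = f q"
  by (induction m) auto
lemma Bw_last: "last (Bw f q (Suc m)) = f q"
  by (induction m) auto

lemma dev_alt: "alt (x # w) \<Longrightarrow> w \<noteq> [] \<Longrightarrow> (x = La) \<noteq> (hd w = La)"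
  by (cases w) auto

context MS2 begin

abbreviation "FF \<equiv> Fw fwd"
abbreviation "BB \<equiv> Bw bwd"

lemma img_cons: "wev a b (x # w) ` S = lev a b x ` (wev a b w ` S)"
  by (simp add: image_comp)

lemma walkF: "wev a b (FF q m) ` gp q = gp (q + int m)"
proof (induction m)
  case 0 then show ?case by simp
next
  case (Suc m)
  then show ?case by (simp only: Fw.simps img_cons Suc stepF) (simp add: algebra_simps)
qed

lemma walkB: "wev a b (BB q m) ` gp q = gp (q - int m)"
proof (induction m)
  case 0 then show ?case by simp
next
  case (Suc m)
  then show ?case by (simp only: Bw.simps img_cons Suc stepB) (simp add: algebra_simps)
qed

lemma fwd_period: "fwd (p + K2 * n) = fwd p" unfolding fwd_def by (simp only: pos_period)
lemma bwd_period: "bwd (p + K2 * n) = bwd p" unfolding bwd_def by (simp only: pos_period)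
lemma gp_period: "gp (p + K2 * n) = gp p" unfolding gp_def by (simp only: pos_period)

lemma FF_period: "FF (q + K2 * n) m = FF q m"
  by (induction m) (auto simp: fwd_period[of "q + int _" n, symmetric] algebra_simps)
lemma BB_period: "BB (q + K2 * n) m = BB q m"
proof (induction m)
  case 0 then show ?case by simp
next
  case (Suc m)
  have "bwd (q + K2 * n - int m) = bwd (q - int m)"
    using bwd_period[of "q - int m" n] by (simp add: algebra_simps)
  then show ?case using Suc by simp
qed

lemma alt_FF: "alt (FF q m)"
proof (induction m)
  case 0 then show ?case by simp
next
  case (Suc m)
  show ?case
  proof (cases m)
    case 0 then show ?thesis by simp
  next
    case (Suc m')
    have "(fwd (q + int (Suc m')) = La) \<noteq> (fwd (q + int m') = La)"
      unfolding fwd_La by simp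
    then show ?thesis using Suc.IH Suc by simp
  qed
qed

lemma dev_letter:
  assumes J: "J \<in> P" and x: "x \<noteq> La" and y: "y \<noteq> La" and xy: "x \<noteq> y" and yJ: "lev a b y ` J \<in> P"
  shows "lev a b x ` J \<subseteq> Z2"
proof -
  have E: "(b ` J \<in> P) \<noteq> (bi ` J \<in> P)" using E2[OF J] .
  show ?thesis
  proof (cases x)
    case Lb
    then have "y = Lbb" using y xy by (cases y) auto
    then have "b ` J \<notin> P" using E yJ by simp
    then show ?thesis using deviate[OF J, of b] Lb by simp
  next
    case Lbb
    then have "y = Lb" using y xy by (cases y) auto
    then have "bi ` J \<notin> P" using E yJ by simp
    then show ?thesis using deviate[OF J, of bi] Lbb by simp
  qed (use x in simp)
qed

lemma off_step:
  assumes "w \<noteq> []" "wev a b w ` S \<subseteq> (if hd w = La then A else Z2)" "(x = La) \<noteq> (hd w = La)"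
  shows "wev a b (x # w) ` S \<subseteq> (if hd (x # w) = La then A else Z2)"
proof (cases "hd w = La")
  case True
  then have x: "x \<noteq> La" using assms by simp
  have "lev a b x ` A \<subseteq> Z2" using bA_Z2 biA_Z2 x by (cases x) auto
  then show ?thesis using assms True x by (simp only: img_cons) (auto)
next
  case False
  then have x: "x = La" using assms by simp
  then show ?thesis using assms False aZ2 by (simp only: img_cons) auto
qed

lemma key: "alt w \<Longrightarrow> (\<exists>m. w = FF q m) \<or> (\<exists>m. w = BB q m) \<or>
   (w \<noteq> [] \<and> wev a b w ` gp q \<subseteq> (if hd w = La then A else Z2))"
proof (induction w)
  case Nil
  then show ?case by (intro disjI1 exI[of _ 0]) simp
next
  case (Cons x w)
  have aw: "alt w" using Cons.prems alt_tl by blast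
  note IH = Cons.IH[OF aw]
  have tyx: "w \<noteq> [] \<Longrightarrow> (x = La) \<noteq> (hd w = La)" using dev_alt Cons.prems by blast
  show ?case
  proof (cases "\<exists>m. w = FF q m")
    case True
    then obtain m where m: "w = FF q m" by blast
    show ?thesis
    proof (cases m)
      case 0
      then have w0: "w = []" using m by simp
      show ?thesis
      proof (cases "x = fwd q \<or> x = bwd q")
        case True
        then show ?thesis
        proof
          assume "x = fwd q"
          then have "x # w = FF q 1" using w0 by simp
          then show ?thesis by blast
        next
          assume "x = bwd q"
          then have "x # w = BB q 1" using w0 by simp
          then show ?thesis by blast
        qed
      next
        case False
        have "lev a b x ` gp q \<subseteq> Z2"
        proof (cases "fwd q = La")
          case True
          then have yb: "bwd q \<noteq> La" using fwd_La bwd_La by simp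
          have "lev a b (bwd q) ` gp q \<in> P" using stepB gp_P by simp
          then show ?thesis using dev_letter[OF gp_P, of x "bwd q"] False True yb by auto
        next
          case ff: False
          have "lev a b (fwd q) ` gp q \<in> P" using stepF gp_P by simp
          moreover have "bwd q = La" using ff fwd_La bwd_La by simp
          ultimately show ?thesis using dev_letter[OF gp_P, of x "fwd q"] False ff by auto
        qed
        moreover have "x \<noteq> La" using False fwd_La[of q] bwd_La[of q] by (cases "even q") auto
        ultimately show ?thesis using w0 by simp
      qed
    next
      case (Suc m')
      define p where "p = q + int m"
      have hdw: "hd w = fwd (q + int m')" using m Suc by simp
      have "(fwd p = La) \<noteq> (fwd (q + int m') = La)" unfolding fwd_La p_def Suc by simp
      then have tx: "(x = La) = (fwd p = La)" using tyx hdw m Suc by auto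
      show ?thesis
      proof (cases "x = fwd p")
        case True
        then have "x # w = FF q (Suc m)" using m p_def by simp
        then show ?thesis by blast
      next
        case False
        then have xL: "x \<noteq> La" "fwd p \<noteq> La" using tx by auto
        have "lev a b (fwd p) ` gp p \<in> P" using stepF gp_P by simp
        then have "lev a b x ` gp p \<subseteq> Z2" using dev_letter[OF gp_P xL(1) xL(2) False] by simp
        moreover have "wev a b (x # w) ` gp q = lev a b x ` gp p"
          by (simp only: img_cons m walkF p_def)
        ultimately show ?thesis using xL by simp
      qed
    qed
  next
    case notF: False
    show ?thesis
    proof (cases "\<exists>m. w = BB q m")
      case True
      then obtain m where m: "w = BB q m" by blast
      show ?thesis
      proof (cases m)
        case 0
        then have "w = FF q 0" using m by simp
        then show ?thesis using notF by blast
      next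
        case (Suc m')
        define p where "p = q - int m"
        have hdw: "hd w = bwd (q - int m')" using m Suc by simp
        have "(bwd p = La) \<noteq> (bwd (q - int m') = La)" unfolding bwd_La p_def Suc by simp
        then have tx: "(x = La) = (bwd p = La)" using tyx hdw m Suc by auto
        show ?thesis
        proof (cases "x = bwd p")
          case True
          then have "x # w = BB q (Suc m)" using m p_def by simp
          then show ?thesis by blast
        next
          case False
          then have xL: "x \<noteq> La" "bwd p \<noteq> La" using tx by auto
          have "lev a b (bwd p) ` gp p \<in> P" using stepB gp_P by simp
          then have "lev a b x ` gp p \<subseteq> Z2" using dev_letter[OF gp_P xL(1) xL(2) False] by simp
          moreover have "wev a b (x # w) ` gp q = lev a b x ` gp p"
            by (simp only: img_cons m walkB p_def)
          ultimately show ?thesis using xL by simp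
        qed
      qed
    next
      case False
      then have off: "w \<noteq> []" "wev a b w ` gp q \<subseteq> (if hd w = La then A else Z2)"
        using IH notF by auto
      have "wev a b (x # w) ` gp q \<subseteq> (if hd (x # w) = La then A else Z2)"
        by (rule off_step[OF off tyx[OF off(1)]])
      then show ?thesis by simp
    qed
  qed
qed

end



context MS2 begin

lemma pos_small: "j < 2 * k \<Longrightarrow> pos (int j) = j"
  unfolding pos_def K2_def by (simp add: zmod_int)

lemma fwd_even: "j < k \<Longrightarrow> fwd (int (2 * j)) = bl j"
  unfolding fwd_def fwdn_def using pos_small[of "2*j"] by simp

lemma FF_mw: "j \<le> k \<Longrightarrow> wev a b (FF 0 (2 * j)) = markov_word a bs j"
proof (induction j)
  case 0 then show ?case by simp
next
  case (Suc j)
  have jk: "j < k" using Suc by simp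
  have e: "2 * Suc j = Suc (Suc (2 * j))" by simp
  have f1: "fwd (int (Suc (2 * j))) = La" using fwd_La by simp
  have f0: "fwd (int (2 * j)) = bl j" using fwd_even[OF jk] .
  have "wev a b (FF 0 (2 * Suc j)) = a \<circ> (bs j \<circ> wev a b (FF 0 (2 * j)))"
    unfolding e using f1 f0 lev_bl[OF jk] by simp
  then show ?case using Suc jk by (simp add: o_assoc)
qed

abbreviation "ff \<equiv> markov_word a bs k"

lemma FF_pow: "wev a b (FF 0 (2 * k * n)) = ff ^^ n"
proof (induction n)
  case 0 then show ?case by simp
next
  case (Suc n)
  have "FF 0 (2 * k * Suc n) = FF (int (2 * k * n)) (2 * k) @ FF 0 (2 * k * n)"
    using Fw_split[of fwd 0 "2*k*n" "2*k"] by (simp add: algebra_simps)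
  also have "FF (int (2 * k * n)) (2 * k) = FF 0 (2 * k)"
    using FF_period[of 0 "int n" "2*k"] by (simp add: K2_def algebra_simps)
  finally show ?case using Suc FF_mw[of k] by (simp add: wev_append)
qed

lemma letter_pair: "(fwd p = La \<and> bwd (p + 1) = La) \<or> (\<exists>i. fwd p = bl i \<and> bwd (p + 1) = blinv i)"
proof (cases "even (pos p)")
  case True
  have lt: "pos p < 2 * k" by (rule pos_lt)
  then have s: "Suc (pos p) < 2 * k" using True by presburger
  then have "pos (p + 1) = Suc (pos p)" using pos_suc by simp
  moreover have "Suc (pos p) div 2 = pos p div 2" using True by presburger
  ultimately show ?thesis using True unfolding fwd_def bwd_def fwdn_def bwdn_def by auto
next
  case False
  then have "odd p" using pos_parity by simp
  then show ?thesis using fwd_La bwd_La by simp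
qed

lemma cancel1: "y \<in> circle \<Longrightarrow> lev a b (bwd (p + 1)) (lev a b (fwd p) y) = y"
  using letter_pair[of p] by (auto simp: bl_def blinv_def aa bi_b b_bi)

lemma cancel2: "y \<in> circle \<Longrightarrow> lev a b (fwd p) (lev a b (bwd (p + 1)) y) = y"
  using letter_pair[of p] by (auto simp: bl_def blinv_def aa bi_b b_bi)

lemma BB_suc_right: "BB p (Suc m) = BB (p - 1) m @ [bwd p]"
  using Bw_split[of bwd p 1 m] by simp

lemma FF_suc_right: "FF q (Suc m) = FF (q + 1) m @ [fwd q]"
  using Fw_split[of fwd q 1 m] by simp

lemma BF: "z \<in> circle \<Longrightarrow> wev a b (BB (q + int m) m) (wev a b (FF q m) z) = z"
proof (induction m)
  case 0 then show ?case by simp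
next
  case (Suc m)
  have c: "wev a b (FF q m) z \<in> circle" using Suc wev_c by blast
  have "wev a b (BB (q + int (Suc m)) (Suc m)) (wev a b (FF q (Suc m)) z)
      = wev a b (BB (q + int m) m) (lev a b (bwd (q + int m + 1)) (lev a b (fwd (q + int m)) (wev a b (FF q m) z)))"
    unfolding BB_suc_right by (simp add: wev_append algebra_simps)
  also have "\<dots> = wev a b (BB (q + int m) m) (wev a b (FF q m) z)" using cancel1 c by simp
  finally show ?case using Suc by simp
qed

lemma FB: "z \<in> circle \<Longrightarrow> wev a b (FF q m) (wev a b (BB (q + int m) m) z) = z"
proof (induction m arbitrary: q)
  case 0 then show ?case by simp
next
  case (Suc m)
  have c: "wev a b (BB (q + 1 + int m) m) z \<in> circle" using Suc wev_c by blast
  have "wev a b (FF q (Suc m)) (wev a b (BB (q + int (Suc m)) (Suc m)) z)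
      = wev a b (FF (q + 1) m) (lev a b (fwd q) (lev a b (bwd (q + 1)) (wev a b (BB (q + 1 + int m) m) z)))"
    unfolding FF_suc_right by (simp add: wev_append algebra_simps)
  also have "\<dots> = wev a b (FF (q + 1) m) (wev a b (BB (q + 1 + int m) m) z)" using cancel2 c by simp
  finally show ?case using Suc.IH[of "q+1"] Suc.prems by simp
qed

abbreviation "gg \<equiv> wev a b (BB 0 (2 * k))"

lemma BB_2k: "BB (int (2 * k)) (2 * k) = BB 0 (2 * k)"
  using BB_period[of 0 1 "2*k"] by (simp add: K2_def)

lemma ff_is: "ff = wev a b (FF 0 (2 * k))" using FF_mw[of k] by simp

lemma gg_ff: "z \<in> circle \<Longrightarrow> gg (ff z) = z"
  using BF[of z 0 "2*k"] BB_2k ff_is by simp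
lemma ff_gg: "z \<in> circle \<Longrightarrow> ff (gg z) = z"
  using FB[of z 0 "2*k"] BB_2k ff_is by simp
lemma ff_c: "z \<in> circle \<Longrightarrow> ff z \<in> circle" using ff_is wev_c by simp
lemma gg_c: "z \<in> circle \<Longrightarrow> gg z \<in> circle" using wev_c by simp

lemma inv_ff: "z \<in> circle \<Longrightarrow> inv_into circle ff z = gg z"
proof -
  assume z: "z \<in> circle"
  have inj: "inj_on ff circle" by (metis gg_ff inj_onI)
  have "inv_into circle ff (ff (gg z)) = gg z" using inv_into_f_f[OF inj gg_c[OF z]] .
  then show ?thesis using ff_gg z by simp
qed

lemma BB_pow: "z \<in> circle \<Longrightarrow> wev a b (BB 0 (2 * k * n)) z = (inv_into circle ff ^^ n) z"
proof (induction n)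
  case 0 then show ?case by simp
next
  case (Suc n)
  have "BB 0 (2 * k * Suc n) = BB (- int (2 * k * n)) (2 * k) @ BB 0 (2 * k * n)"
    using Bw_split[of bwd 0 "2*k*n" "2*k"] by (simp add: algebra_simps)
  also have "BB (- int (2 * k * n)) (2 * k) = BB 0 (2 * k)"
    using BB_period[of 0 "- int n" "2*k"] by (simp add: K2_def algebra_simps)
  finally have e: "BB 0 (2 * k * Suc n) = BB 0 (2 * k) @ BB 0 (2 * k * n)" .
  have c: "wev a b (BB 0 (2 * k * n)) z \<in> circle" using wev_c Suc by blast
  show ?case unfolding e using Suc inv_ff[OF c] by (simp add: wev_append)
qed

definition "Wd n = (if 0 \<le> n then FF 0 (2 * k * nat n) else BB 0 (2 * k * nat (- n)))"

lemma intpow_Wd: "z \<in> circle \<Longrightarrow> int_pow ff n z = wev a b (Wd n) z"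
  unfolding int_pow_def Wd_def using FF_pow BB_pow by simp

lemma Wd_stab: "wev a b (Wd n) ` gp 0 = gp 0"
proof (cases "0 \<le> n")
  case True
  then have "wev a b (Wd n) ` gp 0 = gp (0 + K2 * n)"
    using walkF[of 0 "2 * k * nat n"] unfolding Wd_def K2_def by (simp add: algebra_simps)
  then show ?thesis using gp_period[of 0 n] by simp
next
  case False
  then have "wev a b (Wd n) ` gp 0 = gp (0 + K2 * n)"
    using walkB[of 0 "2 * k * nat (- n)"] unfolding Wd_def K2_def by (simp add: algebra_simps)
  then show ?thesis using gp_period[of 0 n] by simp
qed

lemma gp0: "gp 0 = I 0" unfolding gp_def pos_def Gn_def by simp
lemma gp_c: "gp p \<subseteq> circle" using gp_P P_c by blast

lemma img_eq_on: "S \<subseteq> circle \<Longrightarrow> \<forall>z\<in>circle. g z = h z \<Longrightarrow> g ` S = h ` S"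
  by (auto simp: image_def) (metis subsetD)+

end



lemma int_pow_inj_gen:
  fixes f :: "complex \<Rightarrow> complex"
  assumes fc: "\<And>z. z \<in> circle \<Longrightarrow> f z \<in> circle"
    and hc: "\<And>z. z \<in> circle \<Longrightarrow> inv_into circle f z \<in> circle"
    and hf: "\<And>z. z \<in> circle \<Longrightarrow> inv_into circle f (f z) = z"
    and fh: "\<And>z. z \<in> circle \<Longrightarrow> f (inv_into circle f z) = z"
    and nz: "\<And>p. p > 0 \<Longrightarrow> \<exists>z\<in>circle. (f ^^ p) z \<noteq> z"
    and eq: "\<forall>z\<in>circle. int_pow f n z = int_pow f m z"
  shows "n = m"
proof -
  define h where "h = inv_into circle f"
  have hc': "\<And>z. z \<in> circle \<Longrightarrow> h z \<in> circle" using hc h_def by simp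
  have fpc: "(f ^^ i) z \<in> circle" if "z \<in> circle" for i z
    using that by (induction i) (auto simp: fc)
  have hpc: "(h ^^ i) z \<in> circle" if "z \<in> circle" for i z
    using that by (induction i) (auto simp: hc')
  have fh_i: "(f ^^ i) ((h ^^ i) z) = z" if "z \<in> circle" for i z
    using that
  proof (induction i)
    case 0 then show ?case by simp
  next
    case (Suc i)
    have e1: "(f ^^ Suc i) x = (f ^^ i) (f x)" for x by (metis funpow_Suc_right comp_apply)
    have "(f ^^ Suc i) ((h ^^ Suc i) z) = (f ^^ i) (f (h ((h ^^ i) z)))"
      by (simp only: e1) simp
    also have "\<dots> = (f ^^ i) ((h ^^ i) z)" using fh hpc[OF Suc.prems] h_def by simp
    finally show ?case using Suc by simp
  qed
  have hf_i: "(h ^^ i) ((f ^^ i) z) = z" if "z \<in> circle" for i z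
    using that
  proof (induction i)
    case 0 then show ?case by simp
  next
    case (Suc i)
    have e1: "(h ^^ Suc i) x = (h ^^ i) (h x)" for x by (metis funpow_Suc_right comp_apply)
    have "(h ^^ Suc i) ((f ^^ Suc i) z) = (h ^^ i) (h (f ((f ^^ i) z)))"
      by (simp only: e1) simp
    also have "\<dots> = (h ^^ i) ((f ^^ i) z)" using hf fpc[OF Suc.prems] h_def by simp
    finally show ?case using Suc by simp
  qed
  have clA: False if ij: "j < i" and e: "\<forall>z\<in>circle. (f ^^ i) z = (f ^^ j) z" for i j
  proof -
    have "\<forall>z'\<in>circle. (f ^^ (i - j)) z' = z'"
    proof
      fix z' assume z': "z' \<in> circle"
      define z where "z = (h ^^ j) z'"
      have zc: "z \<in> circle" using hpc z' z_def by simp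
      have fj: "(f ^^ j) z = z'" using fh_i z' z_def by simp
      have "(f ^^ i) z = (f ^^ (i - j)) ((f ^^ j) z)"
        using ij by (metis funpow_add comp_apply le_add_diff_inverse2 less_imp_le_nat)
      then show "(f ^^ (i - j)) z' = z'" using e zc fj by simp
    qed
    then show False using nz[of "i - j"] ij by auto
  qed
  have clB: False if ij: "j < i" and e: "\<forall>z\<in>circle. (h ^^ i) z = (h ^^ j) z" for i j
  proof -
    have hid: "\<forall>z'\<in>circle. (h ^^ (i - j)) z' = z'"
    proof
      fix z' assume z': "z' \<in> circle"
      define z where "z = (f ^^ j) z'"
      have zc: "z \<in> circle" using fpc z' z_def by simp
      have hj: "(h ^^ j) z = z'" using hf_i z' z_def by simp
      have "(h ^^ i) z = (h ^^ (i - j)) ((h ^^ j) z)"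
        using ij by (metis funpow_add comp_apply le_add_diff_inverse2 less_imp_le_nat)
      then show "(h ^^ (i - j)) z' = z'" using e zc hj by simp
    qed
    have "\<forall>z\<in>circle. (f ^^ (i - j)) z = z"
    proof
      fix z assume z: "z \<in> circle"
      have "(f ^^ (i - j)) z = (f ^^ (i - j)) ((h ^^ (i - j)) z)" using hid z by simp
      then show "(f ^^ (i - j)) z = z" using fh_i z by simp
    qed
    then show False using nz[of "i - j"] ij by auto
  qed
  have clC: False if bp: "0 < bb" and e: "\<forall>z\<in>circle. (f ^^ aa) z = (h ^^ bb) z" for aa bb
  proof -
    have "\<forall>z\<in>circle. (f ^^ (bb + aa)) z = z"
    proof
      fix z assume z: "z \<in> circle"
      have "(f ^^ (bb + aa)) z = (f ^^ bb) ((f ^^ aa) z)" by (simp add: funpow_add)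
      also have "\<dots> = (f ^^ bb) ((h ^^ bb) z)" using e z by simp
      finally show "(f ^^ (bb + aa)) z = z" using fh_i z by simp
    qed
    then show False using nz[of "bb + aa"] bp by auto
  qed
  show ?thesis
  proof (rule ccontr)
    assume nm: "n \<noteq> m"
    show False
    proof (cases "0 \<le> n"; cases "0 \<le> m")
      assume "0 \<le> n" "0 \<le> m"
      then have e: "\<forall>z\<in>circle. (f ^^ nat n) z = (f ^^ nat m) z" using eq by (simp add: int_pow_def)
      have "nat n \<noteq> nat m" using nm \<open>0 \<le> n\<close> \<open>0 \<le> m\<close> by simp
      then show False
        using clA[of "nat m" "nat n"] clA[of "nat n" "nat m"] e by (metis linorder_neqE_nat)
    next
      assume "0 \<le> n" "\<not> 0 \<le> m"
      then have e: "\<forall>z\<in>circle. (f ^^ nat n) z = (h ^^ nat (- m)) z" using eq by (simp add: int_pow_def h_def)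
      show False using clC[OF _ e] \<open>\<not> 0 \<le> m\<close> by simp
    next
      assume "\<not> 0 \<le> n" "0 \<le> m"
      then have e: "\<forall>z\<in>circle. (f ^^ nat m) z = (h ^^ nat (- n)) z" using eq by (simp add: int_pow_def h_def)
      show False using clC[OF _ e] \<open>\<not> 0 \<le> n\<close> by simp
    next
      assume "\<not> 0 \<le> n" "\<not> 0 \<le> m"
      then have e: "\<forall>z\<in>circle. (h ^^ nat (- n)) z = (h ^^ nat (- m)) z" using eq by (simp add: int_pow_def h_def)
      have "nat (- n) \<noteq> nat (- m)" using nm \<open>\<not> 0 \<le> n\<close> \<open>\<not> 0 \<le> m\<close> by simp
      then show False
        using clB[of "nat (- m)" "nat (- n)"] clB[of "nat (- n)" "nat (- m)"] e by (metis linorder_neqE_nat)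
    qed
  qed
qed

context MS2 begin

lemma stab_word:
  assumes aw: "alt w" and st: "wev a b w ` gp 0 = gp 0"
  shows "\<exists>n. \<forall>z\<in>circle. wev a b w z = int_pow ff n z"
proof -
  have gpQ: "gp 0 \<subseteq> Q" "gp 0 \<noteq> {}" using gp_P P_Q P_ne by auto
  have K2e: "K2 = int (2 * k)" unfolding K2_def by simp
  consider (F) m where "w = FF 0 m" | (B) m where "w = BB 0 m"
    | (O) "w \<noteq> []" "wev a b w ` gp 0 \<subseteq> (if hd w = La then A else Z2)"
    using key[OF aw, of 0] by blast
  then show ?thesis
  proof cases
    case (F m)
    then have "gp (int m) = gp 0" using walkF[of 0 m] st by simp
    then have "int m mod K2 = 0" using gp_inj by fastforce
    then have "m mod (2 * k) = 0" unfolding K2e by (metis of_nat_eq_0_iff zmod_int)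
    then have me: "m = 2 * k * nat (int (m div (2 * k)))" using mult_div_mod_eq[of "2*k" m] by simp
    have "w = Wd (int (m div (2 * k)))" unfolding Wd_def using F me by simp
    then show ?thesis using intpow_Wd by metis
  next
    case (B m)
    then have "gp (- int m) = gp 0" using walkB[of 0 m] st by simp
    then have "(- int m) mod K2 = 0" using gp_inj by fastforce
    then have "int m mod K2 = 0" by (metis dvd_minus_iff mod_eq_0_iff_dvd)
    then have "m mod (2 * k) = 0" unfolding K2e by (metis of_nat_eq_0_iff zmod_int)
    then have me: "m = 2 * k * (m div (2 * k))" using mult_div_mod_eq[of "2*k" m] by simp
    show ?thesis
    proof (cases "m div (2 * k) = 0")
      case True
      then have "w = Wd 0" unfolding Wd_def using B me by simp
      then show ?thesis using intpow_Wd by metis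
    next
      case False
      then have "w = Wd (- int (m div (2 * k)))" unfolding Wd_def using B me by simp
      then show ?thesis using intpow_Wd by metis
    qed
  next
    case O
    then have "gp 0 \<subseteq> (if hd w = La then A else Z2)" using st by simp
    then show ?thesis using gpQ A_Q Z2_Q by (auto split: if_splits)
  qed
qed

lemma ff_nz: "p > 0 \<Longrightarrow> \<exists>z\<in>circle. (ff ^^ p) z \<noteq> z"
proof (rule ccontr)
  assume p: "p > 0" and "\<not> (\<exists>z\<in>circle. (ff ^^ p) z \<noteq> z)"
  then have idp: "\<forall>z\<in>circle. wev a b (FF 0 (2 * k * p)) z = z" using FF_pow by simp
  define w where "w = FF 0 (2 * k * p)"
  have wlen: "2 * k * p = Suc (2 * k * p - 1)" using p kge by simp
  have lw: "last w = fwd 0" unfolding w_def by (subst wlen) (rule Fw_last)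
  have f0: "fwd 0 = bl 0" using fwd_even[of 0] kge by simp
  have f1: "fwd 1 = La" using fwd_La by simp
  have p1: "pos 1 = 1" using pos_small[of 1] kge by simp
  have b1: "bwd 1 = blinv 0" unfolding bwd_def bwdn_def p1 by simp
  have gp1: "gp 1 \<subseteq> Q" "gp 1 \<noteq> {}" using gp_P P_Q P_ne by auto
  have img: "wev a b w ` gp 1 = gp 1"
    using idp gp_c[of 1] unfolding w_def by (auto simp: image_def) (metis subsetD)+
  have wne: "w \<noteq> []" using wlen w_def by (metis Fw.simps(2) list.distinct(1))
  consider (F) m where "w = FF 1 m" | (B) m where "w = BB 1 m"
    | (O) "w \<noteq> []" "wev a b w ` gp 1 \<subseteq> (if hd w = La then A else Z2)"
  proof -
    have "alt w" unfolding w_def by (rule alt_FF)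
    from key[OF this, of 1] show ?thesis using that by blast
  qed
  then show False
  proof cases
    case (F m)
    then obtain m' where "m = Suc m'" using wne by (cases m) auto
    then have "last w = fwd 1" using F Fw_last by simp
    then show ?thesis using lw f0 f1 bl_ne by simp
  next
    case (B m)
    then obtain m' where "m = Suc m'" using wne by (cases m) auto
    then have "last w = bwd 1" using B Bw_last by simp
    then show ?thesis using lw f0 b1 bl_ne by simp
  next
    case O
    then show ?thesis using img gp1 A_Q Z2_Q by (auto split: if_splits)
  qed
qed

end



theorem lemma11p3:
  fixes a b :: "complex \<Rightarrow> complex" and A B Bi :: "complex set" and k :: nat
    and I I' :: "nat \<Rightarrow> complex set" and bs :: "nat \<Rightarrow> complex \<Rightarrow> complex"
  assumes M: "markov_system a b A B Bi k"
    and enum: "{J. principal_gap A B Bi J} = I ` {..<k} \<union> I' ` {..<k}"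
    and injI: "inj_on I {..<k}" and injI': "inj_on I' {..<k}"
    and disj: "I ` {..<k} \<inter> I' ` {..<k} = {}"
    and bs: "\<forall>i<k. bs i \<in> {b, inv_into circle b} \<and> bs i ` I i = I' i \<and> a ` I' i = I (Suc i mod k)"
  shows "(\<lambda>g. restrict g circle) ` {g \<in> gen_group a b. g ` I 0 = I 0}
           = range (\<lambda>n::int. restrict (int_pow (markov_word a bs k) n) circle)
       \<and> inj (\<lambda>n::int. restrict (int_pow (markov_word a bs k) n) circle)"
proof -
  interpret MS2 a b A B Bi k I I' bs
    using assms by (unfold_locales) auto
  have I0: "I 0 = gp 0" using gp0 by simp
  have part1: "(\<lambda>g. restrict g circle) ` {g \<in> gen_group a b. g ` I 0 = I 0}
           = range (\<lambda>n::int. restrict (int_pow ff n) circle)"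
  proof
    show "(\<lambda>g. restrict g circle) ` {g \<in> gen_group a b. g ` I 0 = I 0}
           \<subseteq> range (\<lambda>n::int. restrict (int_pow ff n) circle)"
    proof
      fix x assume "x \<in> (\<lambda>g. restrict g circle) ` {g \<in> gen_group a b. g ` I 0 = I 0}"
      then obtain g where g: "g \<in> gen_group a b" "g ` I 0 = I 0" "x = restrict g circle" by blast
      obtain w where w: "alt w" "\<forall>z\<in>circle. g z = wev a b w z" using normalize[OF g(1)] by blast
      have "wev a b w ` gp 0 = g ` gp 0" using img_eq_on[OF gp_c, of "wev a b w" g] w by simp
      then have "wev a b w ` gp 0 = gp 0" using g(2) I0 by simp
      then obtain n where n: "\<forall>z\<in>circle. wev a b w z = int_pow ff n z" using stab_word[OF w(1)] by blast
      have "x = restrict (int_pow ff n) circle" unfolding g(3) using w n by (intro restrict_ext) simp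
      then show "x \<in> range (\<lambda>n::int. restrict (int_pow ff n) circle)" by blast
    qed
    show "range (\<lambda>n::int. restrict (int_pow ff n) circle)
          \<subseteq> (\<lambda>g. restrict g circle) ` {g \<in> gen_group a b. g ` I 0 = I 0}"
    proof
      fix x assume "x \<in> range (\<lambda>n::int. restrict (int_pow ff n) circle)"
      then obtain n where n: "x = restrict (int_pow ff n) circle" by blast
      have "wev a b (Wd n) \<in> gen_group a b" by (rule wev_in_group)
      moreover have "wev a b (Wd n) ` I 0 = I 0" using Wd_stab I0 by simp
      moreover have "x = restrict (wev a b (Wd n)) circle" unfolding n using intpow_Wd by (intro restrict_ext) simp
      ultimately show "x \<in> (\<lambda>g. restrict g circle) ` {g \<in> gen_group a b. g ` I 0 = I 0}" by blast
    qed
  qed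
  have part2: "inj (\<lambda>n::int. restrict (int_pow ff n) circle)"
  proof (rule inj_onI)
    fix n m :: int
    assume e: "restrict (int_pow ff n) circle = restrict (int_pow ff m) circle"
    have "\<forall>z\<in>circle. int_pow ff n z = int_pow ff m z"
    proof
      fix z assume z: "z \<in> circle"
      have "restrict (int_pow ff n) circle z = restrict (int_pow ff m) circle z" using e by simp
      then show "int_pow ff n z = int_pow ff m z" using z by simp
    qed
    then show "n = m"
      by (rule int_pow_inj_gen[rotated 5]) (auto simp: ff_c inv_ff gg_c gg_ff ff_gg ff_nz)
  qed
  show ?thesis using part1 part2 by simp
qed


end
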